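(* Let $g,h:[0,1]\to\mathbb{R}$ be piecewise continuous and strictly monotonic and regular. Let $F_g,F_h$ be the distribution functions of $g(U_0),h(U_0)$ for $U_0\sim\mathcal{U}(0,1)$. Then the uniform-distribution-preserving transformations $T_g=F_g\circ g$ and $T_h=F_h\circ h$ are regular.
   Context: $\psi$ is piecewise continuous and strictly monotonic if there is a finite partition $0=u_0<\dots<u_M=1$ with $\psi$ continuous and strictly monotonic on each $(u_{m-1},u_m)$. $\psi$ is regular if it is continuous on $[0,1]$, continuously differentiable on $(0,1)$, its derivative is bounded on $(0,1)$, and $\psi'(u)=0$ iff $u$ is a turning point (interior local extremum) of $\psi$. A map $T:[0,1]\to[0,1]$ is uniform-distribution-preserving (udp) if $T(U)\sim\mathcal{U}(0,1)$ for $U\sim\mathcal{U}(0,1)$; a udp transformation is regular if there is a finite partition $0=a_0<\dots<a_L=1$ such that $T$ is continuously differentiable on each $(a_{\ell-1},a_\ell)$. *)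

theory Defs
  imports "HOL-Probability.Probability"
begin

definition unif01 :: "real measure" where
  "unif01 = restrict_space lborel {0..1}"

definition pw_cont_strict_mono :: "(real \<Rightarrow> real) \<Rightarrow> bool" where
  "pw_cont_strict_mono \<psi> \<longleftrightarrow>
     (\<exists>(u::nat \<Rightarrow> real) M. u 0 = 0 \<and> u M = 1 \<and> (\<forall>m<M. u m < u (Suc m)) \<and>
        (\<forall>m\<in>{1..M}. continuous_on {u (m-1)<..<u m} \<psi> \<and>
            ((\<forall>x\<in>{u (m-1)<..<u m}. \<forall>y\<in>{u (m-1)<..<u m}. x < y \<longrightarrow> \<psi> x < \<psi> y) \<or>
             (\<forall>x\<in>{u (m-1)<..<u m}. \<forall>y\<in>{u (m-1)<..<u m}. x < y \<longrightarrow> \<psi> y < \<psi> x))))"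

definition turning_point :: "(real \<Rightarrow> real) \<Rightarrow> real \<Rightarrow> bool" where
  "turning_point \<psi> u \<longleftrightarrow> u \<in> {0<..<1} \<and>
     (\<exists>e>0. (\<forall>v. \<bar>v - u\<bar> < e \<longrightarrow> \<psi> v \<le> \<psi> u) \<or> (\<forall>v. \<bar>v - u\<bar> < e \<longrightarrow> \<psi> u \<le> \<psi> v))"

definition regular_fun :: "(real \<Rightarrow> real) \<Rightarrow> bool" where
  "regular_fun \<psi> \<longleftrightarrow> continuous_on {0..1} \<psi> \<and>
     (\<exists>\<psi>'. (\<forall>u\<in>{0<..<1}. (\<psi> has_real_derivative \<psi>' u) (at u)) \<and>
           continuous_on {0<..<1} \<psi>' \<and> bounded (\<psi>' ` {0<..<1}) \<and>
           (\<forall>u\<in>{0<..<1}. \<psi>' u = 0 \<longleftrightarrow> turning_point \<psi> u))"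

definition distfun :: "(real \<Rightarrow> real) \<Rightarrow> real \<Rightarrow> real" where
  "distfun g x = measure unif01 {u \<in> space unif01. g u \<le> x}"

definition udp :: "(real \<Rightarrow> real) \<Rightarrow> bool" where
  "udp T \<longleftrightarrow> T \<in> measurable unif01 unif01 \<and> distr unif01 unif01 T = unif01"

definition regular_udp :: "(real \<Rightarrow> real) \<Rightarrow> bool" where
  "regular_udp T \<longleftrightarrow> udp T \<and>
     (\<exists>(a::nat \<Rightarrow> real) L. a 0 = 0 \<and> a L = 1 \<and> (\<forall>l<L. a l < a (Suc l)) \<and>
        (\<forall>l\<in>{1..L}. \<exists>T'. (\<forall>u\<in>{a (l-1)<..<a l}. (T has_real_derivative T' u) (at u)) \<and>
                          continuous_on {a (l-1)<..<a l} T'))"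

end

theory Submission
  imports Defs
begin


locale piece =
  fixes g gd :: "real \<Rightarrow> real" and p q :: real and inc :: bool
  assumes pq: "p < q" and cont: "continuous_on {p..q} g"
  and mono: "if inc then (\<forall>x\<in>{p<..<q}. \<forall>y\<in>{p<..<q}. x<y \<longrightarrow> g x < g y)
             else (\<forall>x\<in>{p<..<q}. \<forall>y\<in>{p<..<q}. x<y \<longrightarrow> g y < g x)"
  and der: "\<And>v. v\<in>{p<..<q} \<Longrightarrow> (g has_real_derivative gd v) (at v)"
  and gdnz: "\<And>v. v\<in>{p<..<q} \<Longrightarrow> gd v \<noteq> 0"
  and gdcont: "\<And>v. v\<in>{p<..<q} \<Longrightarrow> isCont gd v"

lemma inc_bound:
  fixes g :: "real \<Rightarrow> real"
  assumes pq: "p < q" and cont: "continuous_on {p..q} g"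
  and mono: "\<forall>x\<in>{p<..<q}. \<forall>y\<in>{p<..<q}. x<y \<longrightarrow> g x < g y"
  and v: "v \<in> {p<..<q}"
  shows "g p < g v \<and> g v < g q"
proof
  define w where "w = (p+v)/2"
  have w: "w \<in> {p<..<v}" using v by (auto simp: w_def)
  have "g p \<le> g w"
  proof (rule continuous_le_on_closure[of "{p<..<w}" g p "g w"])
    show "continuous_on (closure {p<..<w}) g" using w v
      by (auto intro: continuous_on_subset[OF cont])
    show "p \<in> closure {p<..<w}" using w by auto
    show "\<And>x. x \<in> {p<..<w} \<Longrightarrow> g x \<le> g w" using mono w v by (auto intro: less_imp_le)
  qed
  also have "g w < g v" using mono w v by auto
  finally show "g p < g v" .
next
  define w where "w = (q+v)/2"
  have w: "w \<in> {v<..<q}" using v by (auto simp: w_def)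
  have "g w \<le> g q"
  proof (rule continuous_ge_on_closure[of "{w<..<q}" g q "g w"])
    show "continuous_on (closure {w<..<q}) g" using w v
      by (auto intro: continuous_on_subset[OF cont])
    show "q \<in> closure {w<..<q}" using w by auto
    show "\<And>x. x \<in> {w<..<q} \<Longrightarrow> g w \<le> g x" using mono w v by (auto intro: less_imp_le)
  qed
  have "g v < g w" using mono w v by auto
  then show "g v < g q" using \<open>g w \<le> g q\<close> by linarith
qed

context piece begin

definition lo where "lo = min (g p) (g q)"
definition hi where "hi = max (g p) (g q)"
definition phi where "phi y = (THE v. v \<in> {p<..<q} \<and> g v = y)"
definition c where "c y = measure lborel {u\<in>{p<..<q}. g u \<le> y}"
definition cd where "cd y = (if lo < y \<and> y < hi then (if inc then 1 else -1) / gd (phi y) else 0)"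

lemma bounds: "v \<in> {p<..<q} \<Longrightarrow> lo < g v \<and> g v < hi"
proof (cases inc)
  case True
  then show "v \<in> {p<..<q} \<Longrightarrow> lo < g v \<and> g v < hi"
    using inc_bound[OF pq cont, of v] mono by (auto simp: lo_def hi_def)
next
  case False
  assume v: "v \<in> {p<..<q}"
  have "continuous_on {p..q} (\<lambda>x. - g x)" by (intro continuous_intros cont)
  from inc_bound[OF pq this _ v] False mono
  show ?thesis by (auto simp: lo_def hi_def)
qed

lemma lohi: "lo < hi"
  using bounds[of "(p+q)/2"] pq by auto

lemma inj: assumes "x \<in> {p<..<q}" "y \<in> {p<..<q}" "g x = g y" shows "x = y"
  using mono assms by (cases x y rule: linorder_cases; cases inc) force+

lemma ex: assumes y: "lo < y" "y < hi" shows "\<exists>v\<in>{p<..<q}. g v = y"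
proof -
  have "\<exists>x\<ge>p. x \<le> q \<and> g x = y"
  proof (cases "g p \<le> g q")
    case True
    then show ?thesis using y pq by (intro IVT' cont) (auto simp: lo_def hi_def)
  next
    case False
    then show ?thesis using y pq by (intro IVT2' cont) (auto simp: lo_def hi_def)
  qed
  then obtain x where "p \<le> x" "x \<le> q" "g x = y" by blast
  moreover have "x \<noteq> p" "x \<noteq> q" using y \<open>g x = y\<close> by (auto simp: lo_def hi_def)
  ultimately show ?thesis by auto
qed

lemma phi: assumes "lo < y" "y < hi" shows "phi y \<in> {p<..<q}" "g (phi y) = y"
proof -
  obtain v where v: "v\<in>{p<..<q}" "g v = y" using ex[OF assms] by blast
  have "phi y = v" unfolding phi_def using v inj by blast
  then show "phi y \<in> {p<..<q}" "g (phi y) = y" using v by auto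
qed

lemma phi_g: "v \<in> {p<..<q} \<Longrightarrow> phi (g v) = v"
  using phi[of "g v"] bounds[of v] inj by auto


lemma c_in: assumes y: "lo < y" "y < hi" shows "c y = (if inc then phi y - p else q - phi y)"
proof (cases inc)
  case True
  have "{u\<in>{p<..<q}. g u \<le> y} = {p<..phi y}"
  proof -
    have st: "\<And>a b. a\<in>{p<..<q} \<Longrightarrow> b\<in>{p<..<q} \<Longrightarrow> a<b \<Longrightarrow> g a < g b" using mono True by auto
    have "u \<in> {p<..<q} \<Longrightarrow> g u \<le> g (phi y) \<longleftrightarrow> u \<le> phi y" for u
      using st[of u "phi y"] st[of "phi y" u] phi[OF y] by (cases u "phi y" rule: linorder_cases) auto
    then show ?thesis using phi[OF y] by auto
  qed
  then show ?thesis using True phi[OF y] by (simp add: c_def)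
next
  case False
  have "{u\<in>{p<..<q}. g u \<le> y} = {phi y..<q}"
  proof -
    have st: "\<And>a b. a\<in>{p<..<q} \<Longrightarrow> b\<in>{p<..<q} \<Longrightarrow> a<b \<Longrightarrow> g b < g a" using mono False by auto
    have "u \<in> {p<..<q} \<Longrightarrow> g u \<le> g (phi y) \<longleftrightarrow> phi y \<le> u" for u
      using st[of u "phi y"] st[of "phi y" u] phi[OF y] by (cases u "phi y" rule: linorder_cases) auto
    then show ?thesis using phi[OF y] by auto
  qed
  then show ?thesis using False phi[OF y] by (simp add: c_def)
qed

lemma c_lo: assumes "y < lo" shows "c y = 0"
proof -
  have "{u\<in>{p<..<q}. g u \<le> y} = {}" using bounds assms by force
  then show ?thesis unfolding c_def by (metis measure_empty)
qed

lemma c_hi: assumes "hi < y" shows "c y = q - p"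
proof -
  have "{u\<in>{p<..<q}. g u \<le> y} = {p<..<q}" using bounds assms by force
  then show ?thesis using pq by (simp add: c_def)
qed

lemma phi_cont: assumes y: "lo < y" "y < hi" shows "isCont phi y"
proof -
  define x where "x = phi y"
  have x: "x \<in> {p<..<q}" "g x = y" using phi[OF y] by (auto simp: x_def)
  define d where "d = min (x-p) (q-x) / 2"
  have d: "d > 0" using x by (auto simp: d_def)
  have zin: "z \<in> {p<..<q}" if "\<bar>z - x\<bar> \<le> d" for z
  proof -
    have "d \<le> (x-p)/2" "d \<le> (q-x)/2" by (auto simp: d_def)
    then show ?thesis using that x d by (auto simp: abs_le_iff)
  qed
  have "isCont phi (g x)"
    by (rule isCont_inverse_function[OF d]) (use phi_g zin DERIV_isCont[OF der] in auto)
  then show ?thesis using x by simp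
qed

lemma phi_deriv: assumes y: "lo < y" "y < hi" shows "(phi has_real_derivative inverse (gd (phi y))) (at y)"
proof (rule DERIV_inverse_function[OF _ _ y])
  show "(g has_real_derivative gd (phi y)) (at (phi y))" using der phi[OF y] by auto
  show "gd (phi y) \<noteq> 0" using gdnz phi[OF y] by auto
  show "\<And>z. lo < z \<Longrightarrow> z < hi \<Longrightarrow> g (phi z) = z" using phi by auto
  show "isCont phi y" using phi_cont[OF y] .
qed

lemma c_deriv: assumes y0: "y0 \<noteq> lo" "y0 \<noteq> hi"
  shows "(c has_real_derivative cd y0) (at y0)" "isCont cd y0"
proof -
  consider "lo < y0 \<and> y0 < hi" | "y0 < lo" | "hi < y0" using y0 lohi by linarith
  then have "(c has_real_derivative cd y0) (at y0) \<and> isCont cd y0"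
  proof cases
    case 1
    have ev: "eventually (\<lambda>y. lo < y \<and> y < hi) (nhds y0)"
      using 1 by (intro eventually_nhds_in_open[of "{lo<..<hi}", simplified]) auto
    have e1: "eventually (\<lambda>y. c y = (if inc then phi y - p else q - phi y)) (nhds y0)"
      using ev by eventually_elim (use c_in in auto)
    have e2: "eventually (\<lambda>y. cd y = (if inc then 1 else -1) / gd (phi y)) (nhds y0)"
      using ev by eventually_elim (auto simp: cd_def)
    have d1: "((\<lambda>y. if inc then phi y - p else q - phi y) has_real_derivative cd y0) (at y0)"
    proof -
      have cdv: "cd y0 = (if inc then 1 else -1) / gd (phi y0)" using 1 by (simp add: cd_def)
      show ?thesis
      proof (cases inc)
        case True
        then show ?thesis using phi_deriv[of y0] 1 unfolding cdv
          by (auto simp: divide_inverse intro!: derivative_eq_intros)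
      next
        case False
        then show ?thesis using phi_deriv[of y0] 1 unfolding cdv
          by (auto simp: divide_inverse intro!: derivative_eq_intros)
      qed
    qed
    have c1: "isCont (\<lambda>y. (if inc then 1 else -1) / gd (phi y)) y0"
      using 1 phi[of y0] gdnz[of "phi y0"]
      by (intro continuous_intros isCont_o2[OF phi_cont] gdcont) auto
    show ?thesis using DERIV_cong_ev[OF refl e1 refl] d1 isCont_cong[OF e2] c1 by auto
  next
    case 2
    have ev: "eventually (\<lambda>y. y < lo) (nhds y0)"
      using 2 by (intro eventually_nhds_in_open[of "{..<lo}", simplified]) auto
    have e1: "eventually (\<lambda>y. c y = 0) (nhds y0)"
      using ev by eventually_elim (use c_lo in auto)
    have e2: "eventually (\<lambda>y. cd y = 0) (nhds y0)"
      using ev by eventually_elim (auto simp: cd_def)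
    have "cd y0 = 0" using 2 by (auto simp: cd_def)
    then show ?thesis using DERIV_cong_ev[OF refl e1 refl] isCont_cong[OF e2] by auto
  next
    case 3
    have ev: "eventually (\<lambda>y. hi < y) (nhds y0)"
      using 3 by (intro eventually_nhds_in_open[of "{hi<..}", simplified]) auto
    have e1: "eventually (\<lambda>y. c y = q - p) (nhds y0)"
      using ev by eventually_elim (use c_hi in auto)
    have e2: "eventually (\<lambda>y. cd y = 0) (nhds y0)"
      using ev by eventually_elim (auto simp: cd_def)
    have "cd y0 = 0" using 3 lohi by (auto simp: cd_def)
    then show ?thesis using DERIV_cong_ev[OF refl e1 refl] isCont_cong[OF e2] by auto
  qed
  then show "(c has_real_derivative cd y0) (at y0)" "isCont cd y0" by auto
qed

end


lemma partition_exists: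
  fixes B :: "real set"
  assumes fin: "finite B" and sub: "B \<subseteq> {0..1}" and b0: "0 \<in> B" and b1: "1 \<in> B"
  shows "\<exists>(a::nat\<Rightarrow>real) L. a 0 = 0 \<and> a L = 1 \<and> (\<forall>l<L. a l < a (Suc l)) \<and>
     (\<forall>l\<in>{1..L}. \<forall>x\<in>{a (l-1)<..<a l}. x \<in> {0<..<1} \<and> x \<notin> B)"
proof -
  obtain xs where ss: "sorted_wrt (<) xs" and set: "set xs = B"
    using finite_set_strict_sorted[OF fin] by blast
  have srt: "sorted xs" using ss by (simp add: sorted_wrt_mono_rel[of _ "(<)" "(\<le>)"])
  have lt: "i < j \<Longrightarrow> j < length xs \<Longrightarrow> xs!i < xs!j" for i j using sorted_wrt_nth_less[OF ss] by auto
  have le: "i \<le> j \<Longrightarrow> j < length xs \<Longrightarrow> xs!i \<le> xs!j" for i j using sorted_nth_mono[OF srt] by auto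
  have inB: "i < length xs \<Longrightarrow> xs!i \<in> B" for i using set nth_mem by blast
  have ne: "length xs > 0" using set b0 by (cases xs) auto
  define L where "L = length xs - 1"
  have L: "L < length xs" using ne by (simp add: L_def)
  obtain k0 where k0: "k0 < length xs" "xs!k0 = 0" using b0 set by (metis in_set_conv_nth)
  obtain k1 where k1: "k1 < length xs" "xs!k1 = 1" using b1 set by (metis in_set_conv_nth)
  have a0: "xs!0 = 0"
  proof -
    have "xs!0 \<le> xs!k0" using le[of 0 k0] k0 by auto
    moreover have "xs!0 \<ge> 0" using inB[of 0] ne sub by auto
    ultimately show ?thesis using k0 by auto
  qed
  have aL: "xs!L = 1"
  proof -
    have "xs!k1 \<le> xs!L" using le[of k1 L] k1 L by (auto simp: L_def)
    moreover have "xs!L \<le> 1" using inB[of L] L sub by auto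
    ultimately show ?thesis using k1 by auto
  qed
  show ?thesis
  proof (intro exI[of _ "\<lambda>i. xs!i"] exI[of _ L] conjI allI impI ballI)
    show "xs!0 = 0" by fact
    show "xs!L = 1" by fact
    fix l assume "l < L" then show "xs!l < xs!(Suc l)" using lt L by auto
  next
    fix l x assume l: "l \<in> {1..L}" and x: "x \<in> {xs!(l-1)<..<xs!l}"
    have "xs!(l-1) \<in> B" "xs!l \<in> B" using inB[of "l-1"] inB[of l] l L by auto
    then have "xs!(l-1) \<ge> 0" "xs!l \<le> 1" using sub by auto
    then show "x \<in> {0<..<1}" using x by auto
    show "x \<notin> B"
    proof
      assume "x \<in> B"
      then obtain k where k: "k < length xs" "xs!k = x" using set by (metis in_set_conv_nth)
      have l1: "l - 1 < length xs" "l < length xs" using l L by auto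
      show False
      proof (cases "k \<le> l-1")
        case True then show False using le[of k "l-1"] k x l1 by auto
      next
        case False then have "l \<le> k" using l by auto then show False using le[of l k] k x l1 by auto
      qed
    qed
  qed
qed



lemma space_unif01[simp]: "space unif01 = {0..1}"
  unfolding unif01_def by (simp add: space_restrict_space)

lemma prob_unif01: "prob_space unif01"
proof (rule prob_spaceI)
  have "emeasure unif01 {0..1} = emeasure lborel {0..1::real}"
    unfolding unif01_def by (rule emeasure_restrict_space) auto
  then show "emeasure unif01 (space unif01) = 1" by simp
qed

lemma measure_unif01: "A \<subseteq> {0..1} \<Longrightarrow> measure unif01 A = measure lborel A"
  unfolding unif01_def by (rule measure_restrict_space) auto

lemma meas_cont_unif01: "continuous_on {0..1} g \<Longrightarrow> (g::real\<Rightarrow>real) \<in> borel_measurable unif01"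
proof -
  assume "continuous_on {0..1} g"
  then have "g \<in> borel_measurable (restrict_space borel {0..1})"
    by (rule borel_measurable_continuous_on_restrict)
  moreover have se: "sets (restrict_space borel {0..1::real}) = sets unif01"
    unfolding unif01_def by (rule sets_restrict_space_cong) simp
  ultimately show ?thesis using measurable_cong_sets[OF se refl, of borel] by metis
qed

lemma udp_lemma:
  fixes g :: "real \<Rightarrow> real"
  assumes gc: "continuous_on {0..1} g" and fin: "\<And>y. finite {v\<in>{0..1}. g v = y}"
  shows "udp (distfun g \<circ> g)"
proof -
  interpret P: prob_space unif01 by (rule prob_unif01)
  have gm: "g \<in> borel_measurable unif01" using meas_cont_unif01[OF gc] .
  have idm: "(\<lambda>v::real. v) \<in> borel_measurable unif01" by (intro meas_cont_unif01 continuous_intros)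
  define D where "D = distr unif01 borel g"
  interpret D: real_distribution D unfolding D_def using gm by simp
  define F where "F = distfun g"
  have FD: "F y = cdf D y" for y
  proof -
    have "cdf D y = measure unif01 (g -` {..y} \<inter> space unif01)"
      unfolding cdf_def D_def by (rule measure_distr[OF gm]) simp
    also have "g -` {..y} \<inter> space unif01 = {u \<in> space unif01. g u \<le> y}" by auto
    finally show ?thesis by (simp add: F_def distfun_def)
  qed
  have F_eq: "F = cdf D" using FD by auto
  have Fcont: "isCont F y" for y
  proof -
    have "measure D {y} = measure unif01 (g -` {y} \<inter> space unif01)"
      unfolding D_def by (rule measure_distr[OF gm]) simp
    also have "g -` {y} \<inter> space unif01 = {v\<in>{0..1}. g v = y}" by auto
    also have "measure unif01 {v\<in>{0..1}. g v = y} = measure lborel {v\<in>{0..1}. g v = y}"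
      by (rule measure_unif01) auto
    also have "\<dots> = 0" using finite_imp_null_set_lborel[OF fin[of y]]
      by (simp add: measure_eq_0_null_sets)
    finally show ?thesis unfolding F_eq by (simp add: D.isCont_cdf)
  qed
  have Fmono: "x \<le> y \<Longrightarrow> F x \<le> F y" for x y unfolding F_eq by (rule D.cdf_nondecreasing)
  have F0: "0 \<le> F y" for y using D.cdf_nonneg[of y] F_eq by simp
  have F1: "F y \<le> 1" for y using D.cdf_bounded_prob[of y] F_eq by simp
  obtain m0 m1 where m: "\<And>v. v \<in> {0..1} \<Longrightarrow> m0 \<le> g v \<and> g v \<le> m1"
  proof -
    have "compact (g ` {0..1})" by (intro compact_continuous_image gc) auto
    then have "bounded (g ` {0..1})" by (rule compact_imp_bounded)
    then obtain B where B: "\<forall>x\<in>g ` {0..1}. norm x \<le> B" by (auto simp: bounded_iff)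
    have "-B \<le> g v \<and> g v \<le> B" if "v \<in> {0..1}" for v
    proof -
      have "norm (g v) \<le> B" using B that by blast
      then have "\<bar>g v\<bar> \<le> B" by simp
      then show ?thesis by linarith
    qed
    then show ?thesis using that[of "-B" B] by blast
  qed
  have Flow: "F y = 0" if y: "y < m0" for y
  proof -
    have "y < g u" if "u \<in> {0..1}" for u using m[OF that] y by linarith
    then have "{u \<in> space unif01. g u \<le> y} = {}" by (auto simp: not_le[symmetric])
    then show ?thesis unfolding F_def distfun_def by (metis measure_empty)
  qed
  have Fhigh: "F y = 1" if y: "m1 \<le> y" for y
  proof -
    have "g u \<le> y" if "u \<in> {0..1}" for u using m[OF that] y by linarith
    then have "{u \<in> space unif01. g u \<le> y} = space unif01" by auto
    then show ?thesis using P.prob_space unfolding F_def distfun_def by metis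
  qed
  define T where "T = F \<circ> g"
  have Tm: "T \<in> borel_measurable unif01"
  proof -
    have "F \<in> borel_measurable borel" using Fmono by (intro borel_measurable_mono) (auto simp: mono_def)
    then show ?thesis unfolding T_def using gm by (simp add: measurable_comp)
  qed
  have Tmeas: "T \<in> measurable unif01 unif01"
    unfolding unif01_def
    proof (rule measurable_restrict_space2)
    show "T \<in> space (restrict_space lborel {0..1}) \<rightarrow> {0..1}" using F0 F1 by (simp add: T_def Pi_iff)
    show "T \<in> measurable (restrict_space lborel {0..1}) lborel" using Tm unfolding unif01_def by simp
  qed
  have cdfT: "cdf (distr unif01 borel T) x = cdf (distr unif01 borel (\<lambda>v. v)) x" for x
  proof -
    have c1: "cdf (distr unif01 borel T) x = measure unif01 {v\<in>{0..1}. F (g v) \<le> x}"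
    proof -
      have "cdf (distr unif01 borel T) x = measure unif01 (T -` {..x} \<inter> space unif01)"
        unfolding cdf_def by (rule measure_distr[OF Tm]) simp
      also have "T -` {..x} \<inter> space unif01 = {v\<in>{0..1}. F (g v) \<le> x}" by (auto simp: T_def)
      finally show ?thesis .
    qed
    have c2: "cdf (distr unif01 borel (\<lambda>v. v)) x = measure unif01 {v\<in>{0..1}. v \<le> x}"
    proof -
      have "cdf (distr unif01 borel (\<lambda>v. v)) x = measure unif01 ((\<lambda>v. v) -` {..x} \<inter> space unif01)"
        unfolding cdf_def by (rule measure_distr[OF idm]) simp
      also have "(\<lambda>v. v) -` {..x} \<inter> space unif01 = {v\<in>{0..1}. v \<le> x}" by auto
      finally show ?thesis .
    qed
    consider "x < 0" | "1 \<le> x" | "0 \<le> x \<and> x < 1" by linarith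
    then show ?thesis
    proof cases
      case 1
      have e: "{v\<in>{0..1}. F (g v) \<le> x} = {}" "{v\<in>{0..1::real}. v \<le> x} = {}"
        using 1 F0 by (metis (no_types, lifting) Collect_empty_eq not_le order.strict_trans2,
           auto)
      show ?thesis unfolding c1 c2 e by simp
    next
      case 2
      have e: "{v\<in>{0..1}. F (g v) \<le> x} = {0..1}" "{v\<in>{0..1::real}. v \<le> x} = {0..1}"
        using 2 F1 by (auto intro: order.trans[of _ 1 x])
      show ?thesis unfolding c1 c2 e by simp
    next
      case 3
      define S where "S = {y. F y \<le> x}"
      have "m0 - 1 \<in> S" using Flow[of "m0 - 1"] 3 by (simp add: S_def)
      then have Sne: "S \<noteq> {}" by blast
      have Sbdd: "bdd_above S"
      proof (rule bdd_aboveI[of _ m1])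
        fix y assume "y \<in> S"
        then have "F y \<le> x" by (simp add: S_def)
        show "y \<le> m1"
        proof (rule ccontr)
          assume "\<not> y \<le> m1"
          then have "F y = 1" using Fhigh by simp
          then show False using \<open>F y \<le> x\<close> 3 by simp
        qed
      qed
      have Scl: "closed S"
      proof -
        have "continuous_on UNIV F" using Fcont by (simp add: continuous_on_eq_continuous_at)
        then show ?thesis unfolding S_def using continuous_closed_preimage[of UNIV F "{..x}"]
          by (simp add: vimage_def)
      qed
      define ys where "ys = Sup S"
      have ysS: "ys \<in> S" unfolding ys_def by (rule closed_contains_Sup[OF Sne Sbdd Scl])
      have Fys: "F ys = x"
      proof (rule ccontr)
        assume "F ys \<noteq> x"
        then have lt: "F ys < x" using ysS by (simp add: S_def)
        have "\<forall>\<^sub>F y in at ys. F y < x"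
          using Fcont[of ys] lt unfolding isCont_def by (rule order_tendstoD(2))
        then obtain d where d: "d > 0" "\<And>y. y \<noteq> ys \<Longrightarrow> dist y ys < d \<Longrightarrow> F y < x"
          unfolding eventually_at by blast
        have "ys + d/2 \<in> S" using d(2)[of "ys + d/2"] d(1) by (auto simp: S_def dist_real_def)
        then have "ys + d/2 \<le> ys" unfolding ys_def by (rule cSup_upper[OF _ Sbdd])
        then show False using d(1) by simp
      qed
      have "{v\<in>{0..1}. F (g v) \<le> x} = {v\<in>{0..1}. g v \<le> ys}"
      proof -
        have "F (g v) \<le> x \<longleftrightarrow> g v \<le> ys" for v
        proof
          assume "F (g v) \<le> x"
          then have "g v \<in> S" by (simp add: S_def)
          then show "g v \<le> ys" unfolding ys_def by (rule cSup_upper[OF _ Sbdd])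
        next
          assume "g v \<le> ys"
          then show "F (g v) \<le> x" using Fmono Fys by metis
        qed
        then show ?thesis by auto
      qed
      then have "cdf (distr unif01 borel T) x = F ys" using c1 by (simp add: F_def distfun_def)
      moreover have "{v\<in>{0..1::real}. v \<le> x} = {0..x}" using 3 by auto
      ultimately show ?thesis using c2 Fys 3 measure_unif01[of "{0..x}"] by simp
    qed
  qed
  have deq: "distr unif01 borel T = distr unif01 borel (\<lambda>v. v)"
  proof (rule cdf_unique)
    show "real_distribution (distr unif01 borel T)" using Tm by simp
    show "real_distribution (distr unif01 borel (\<lambda>v. v))" using idm by simp
    show "cdf (distr unif01 borel T) = cdf (distr unif01 borel (\<lambda>v. v))" using cdfT by auto
  qed
  have "distr unif01 unif01 T = unif01"
  proof (rule measure_eqI)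
    show "sets (distr unif01 unif01 T) = sets unif01" by simp
    fix A assume "A \<in> sets (distr unif01 unif01 T)"
    then have A: "A \<in> sets unif01" by simp
    then have Ab: "A \<in> sets borel" "A \<subseteq> {0..1}"
      unfolding unif01_def by (auto simp: sets_restrict_space_iff)
    have "emeasure (distr unif01 unif01 T) A = emeasure unif01 (T -` A \<inter> space unif01)"
      by (rule emeasure_distr[OF Tmeas A])
    also have "\<dots> = emeasure (distr unif01 borel T) A"
      by (rule emeasure_distr[OF Tm Ab(1), symmetric])
    also have "\<dots> = emeasure (distr unif01 borel (\<lambda>v. v)) A" by (simp add: deq)
    also have "\<dots> = emeasure unif01 ((\<lambda>v. v) -` A \<inter> space unif01)"
      by (rule emeasure_distr[OF idm Ab(1)])
    also have "(\<lambda>v. v) -` A \<inter> space unif01 = A" using Ab by auto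
    finally show "emeasure (distr unif01 unif01 T) A = emeasure unif01 A" .
  qed
  then show ?thesis using Tmeas unfolding udp_def T_def F_def by simp
qed



lemma not_turning:
  fixes g :: "real \<Rightarrow> real"
  assumes v: "v \<in> {p<..<q}"
  and mono: "(\<forall>x\<in>{p<..<q}. \<forall>y\<in>{p<..<q}. x<y \<longrightarrow> g x < g y) \<or> (\<forall>x\<in>{p<..<q}. \<forall>y\<in>{p<..<q}. x<y \<longrightarrow> g y < g x)"
  shows "\<not> turning_point g v"
proof
  assume "turning_point g v"
  then obtain e where e: "e > 0" and ext: "(\<forall>w. \<bar>w - v\<bar> < e \<longrightarrow> g w \<le> g v) \<or> (\<forall>w. \<bar>w - v\<bar> < e \<longrightarrow> g v \<le> g w)"
    unfolding turning_point_def by blast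
  define d where "d = min e (min (v-p) (q-v)) / 2"
  have d: "d > 0" "d < e" "d < v - p" "d < q - v" using e v by (auto simp: d_def)
  have w1: "v - d \<in> {p<..<q}" "\<bar>(v - d) - v\<bar> < e" and w2: "v + d \<in> {p<..<q}" "\<bar>(v + d) - v\<bar> < e"
    using d v by auto
  have lt1: "v - d < v" "v < v + d" using d by auto
  show False
    using mono ext w1 w2 lt1 v
    by (smt (verit, best))
qed


lemma regular_one:
  fixes g :: "real \<Rightarrow> real"
  assumes pw: "pw_cont_strict_mono g" and rg: "regular_fun g"
  shows "regular_udp (distfun g \<circ> g)"
proof -
  obtain u :: "nat \<Rightarrow> real" and M where u0: "u 0 = 0" and uM: "u M = 1" and uinc: "\<forall>m<M. u m < u (Suc m)"
    and pc: "\<forall>m\<in>{1..M}. continuous_on {u (m-1)<..<u m} g \<and>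
            ((\<forall>x\<in>{u (m-1)<..<u m}. \<forall>y\<in>{u (m-1)<..<u m}. x < y \<longrightarrow> g x < g y) \<or>
             (\<forall>x\<in>{u (m-1)<..<u m}. \<forall>y\<in>{u (m-1)<..<u m}. x < y \<longrightarrow> g y < g x))"
    using pw unfolding pw_cont_strict_mono_def by blast
  obtain gd where gc: "continuous_on {0..1} g"
    and gder: "\<forall>v\<in>{0<..<1}. (g has_real_derivative gd v) (at v)"
    and gdc: "continuous_on {0<..<1} gd"
    and tp: "\<forall>v\<in>{0<..<1}. gd v = 0 \<longleftrightarrow> turning_point g v"
    using rg unfolding regular_fun_def by blast
  have umono: "j \<le> M \<Longrightarrow> i < j \<Longrightarrow> u i < u j" for i j
  proof (induction j)
    case 0 then show ?case by simp
  next
    case (Suc j)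
    show ?case
    proof (cases "i = j")
      case True then show ?thesis using uinc Suc.prems by auto
    next
      case False
      then have "u i < u j" using Suc by auto
      also have "u j < u (Suc j)" using uinc Suc.prems by auto
      finally show ?thesis .
    qed
  qed
  have urange: "u i \<in> {0..1}" if "i \<le> M" for i
  proof -
    have "u 0 \<le> u i" using umono[of i 0] that by (cases "i = 0") auto
    moreover have "u i \<le> u M" using umono[of M i] that by (cases "i = M") auto
    ultimately show ?thesis using u0 uM by auto
  qed
  have Isub: "{u (m-1)<..<u m} \<subseteq> {0<..<1}" if "m \<in> {1..M}" for m
  proof -
    have "m - 1 \<le> M" "m \<le> M" using that by auto
    then show ?thesis using urange[of "m-1"] urange[of m] by auto
  qed
  have Csub: "{u (m-1)..u m} \<subseteq> {0..1}" if "m \<in> {1..M}" for m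
  proof -
    have "m - 1 \<le> M" "m \<le> M" using that by auto
    then show ?thesis using urange[of "m-1"] urange[of m] by auto
  qed
  define incm where "incm m = (\<forall>x\<in>{u (m-1)<..<u m}. \<forall>y\<in>{u (m-1)<..<u m}. x < y \<longrightarrow> g x < g y)" for m
  have gdcont: "isCont gd v" if "v \<in> {0<..<1}" for v
    using gdc that by (simp add: continuous_on_eq_continuous_at)
  have pieces: "piece g gd (u (m-1)) (u m) (incm m)" if m: "m \<in> {1..M}" for m
  proof
    show "u (m-1) < u m" using umono[of m "m-1"] m by auto
    show "continuous_on {u (m - 1)..u m} g" using continuous_on_subset[OF gc Csub[OF m]] .
    show "if incm m then \<forall>x\<in>{u (m - 1)<..<u m}. \<forall>y\<in>{u (m - 1)<..<u m}. x < y \<longrightarrow> g x < g y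
          else \<forall>x\<in>{u (m - 1)<..<u m}. \<forall>y\<in>{u (m - 1)<..<u m}. x < y \<longrightarrow> g y < g x"
    proof -
      have pm: "incm m \<or> (\<forall>x\<in>{u (m-1)<..<u m}. \<forall>y\<in>{u (m-1)<..<u m}. x < y \<longrightarrow> g y < g x)"
        using pc m unfolding incm_def by blast
      show ?thesis
      proof (cases "incm m")
        case True then show ?thesis using True[unfolded incm_def] by simp
      next
        case False then show ?thesis using pm by simp
      qed
    qed
    fix v assume v: "v \<in> {u (m - 1)<..<u m}"
    then have v01: "v \<in> {0<..<1}" using Isub[OF m] by blast
    show "(g has_real_derivative gd v) (at v)" using gder v01 by blast
    show "isCont gd v" using gdcont v01 .
    have "\<not> turning_point g v" by (rule not_turning[OF v]) (use pc m in blast)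
    then show "gd v \<noteq> 0" using tp v01 by blast
  qed
  have cover: "v \<in> u ` {0..M} \<or> (\<exists>m\<in>{1..M}. v \<in> {u (m-1)<..<u m})" if v: "v \<in> {0..1}" for v
  proof (cases "v \<in> u ` {0..M}")
    case False
    define m where "m = (LEAST m. v < u m)"
    have ex: "v < u M" using False v uM by (metis atLeastAtMost_iff image_eqI order_le_less order_refl zero_le)
    have vm: "v < u m" unfolding m_def by (rule LeastI[of _ M]) (rule ex)
    have mM: "m \<le> M" unfolding m_def by (rule Least_le) (rule ex)
    have m0: "m \<noteq> 0"
    proof
      assume "m = 0" then show False using vm v u0 by simp
    qed
    have "\<not> v < u (m-1)" unfolding m_def by (rule not_less_Least) (use m0 in \<open>simp add: m_def\<close>)
    moreover have "v \<noteq> u (m-1)" using False mM by auto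
    ultimately have "u (m-1) < v" by auto
    then show ?thesis using vm m0 mM by auto
  qed simp
  have fin: "finite {v\<in>{0..1}. g v \<in> W}" if W: "finite W" for W
  proof -
    have "{v\<in>{0..1}. g v \<in> W} \<subseteq> u ` {0..M} \<union> (\<Union>m\<in>{1..M}. {v\<in>{u (m-1)<..<u m}. g v \<in> W})"
      using cover by blast
    moreover have "finite {v\<in>{u (m-1)<..<u m}. g v \<in> W}" if m: "m \<in> {1..M}" for m
    proof (rule inj_on_finite[OF _ _ W])
      show "inj_on g {v \<in> {u (m - 1)<..<u m}. g v \<in> W}"
        using piece.inj[OF pieces[OF m]] by (auto simp: inj_on_def)
    qed auto
    ultimately show ?thesis by (meson finite_UN_I finite_Un finite_atLeastAtMost finite_imageI finite_subset)
  qed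
  have F_sum: "distfun g y = (\<Sum>m\<in>{1..M}. piece.c g (u (m-1)) (u m) y)" for y
  proof -
    define S where "S = {v\<in>{0..1}. g v \<le> y}"
    define A where "A m = {v\<in>{u (m-1)<..<u m}. g v \<le> y}" for m
    have "S = {0..1} \<inter> g -` {..y}" by (auto simp: S_def)
    then have Scl: "closed S" using continuous_closed_preimage[OF gc closed_atLeastAtMost closed_atMost] by simp
    have AS: "A m = {u (m-1)<..<u m} \<inter> S" if "m \<in> {1..M}" for m
      using Isub[OF that] by (auto simp: A_def S_def)
    have Asets: "A ` {1..M} \<subseteq> sets lborel"
    proof safe
      fix m assume "m \<in> {1..M}"
      then show "A m \<in> sets lborel" unfolding AS[OF \<open>m \<in> {1..M}\<close>] using Scl by auto
    qed
    have Afin: "emeasure lborel (A m) \<noteq> \<infinity>" if "m \<in> {1..M}" for m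
    proof -
      have "bounded (A m)" by (rule bounded_subset[of "{u (m-1)..u m}"]) (auto simp: A_def)
      then show ?thesis using emeasure_bounded_finite[of "A m"] by simp
    qed
    have Adisj: "disjoint_family_on A {1..M}"
      unfolding disjoint_family_on_def
    proof (intro ballI impI)
      fix m n assume m: "m \<in> {1..M}" and n: "n \<in> {1..M}" and mn: "m \<noteq> n"
      have key: "A i \<inter> A j = {}" if i: "i \<in> {1..M}" and j: "j \<in> {1..M}" and ij: "i < j" for i j
      proof -
        have "u i \<le> u (j-1)"
        proof (cases "i = j - 1")
          case False
          then have "i < j - 1" "j - 1 \<le> M" using ij j by auto
          then show ?thesis using umono[of "j-1" i] by simp
        qed simp
        then show ?thesis by (auto simp: A_def)
      qed
      show "A m \<inter> A n = {}"
      proof (cases "m < n")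
        case True then show ?thesis using key m n by blast
      next
        case False then have "n < m" using mn by auto
        then show ?thesis using key[of n m] m n by blast
      qed
    qed
    have U: "measure lborel (\<Union>m\<in>{1..M}. A m) = (\<Sum>m\<in>{1..M}. measure lborel (A m))"
      by (rule measure_finite_Union[OF _ Asets Adisj Afin]) auto
    have Useq: "S = (\<Union>m\<in>{1..M}. A m) \<union> (S \<inter> u ` {0..M})"
    proof
      show "S \<subseteq> (\<Union>m\<in>{1..M}. A m) \<union> (S \<inter> u ` {0..M})"
      proof
        fix v assume v: "v \<in> S"
        then have "v \<in> {0..1}" by (simp add: S_def)
        from cover[OF this] v show "v \<in> (\<Union>m\<in>{1..M}. A m) \<union> (S \<inter> u ` {0..M})"
          by (auto simp: A_def S_def)
      qed
      show "(\<Union>m\<in>{1..M}. A m) \<union> (S \<inter> u ` {0..M}) \<subseteq> S"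
        using AS by auto
    qed
    have "measure lborel S = measure lborel (\<Union>m\<in>{1..M}. A m)"
    proof -
      have "(\<Union>m\<in>{1..M}. A m) \<in> sets lborel" using Asets by auto
      moreover have "S \<inter> u ` {0..M} \<in> null_sets lborel" by (rule finite_imp_null_set_lborel) auto
      ultimately show ?thesis by (subst Useq) (rule measure_Un_null_set)
    qed
    moreover have "distfun g y = measure lborel S"
      unfolding distfun_def space_unif01 S_def by (rule measure_unif01) auto
    moreover have "piece.c g (u (m-1)) (u m) y = measure lborel (A m)" if "m \<in> {1..M}" for m
      using piece.c_def[OF pieces[OF that]] by (simp add: A_def)
    ultimately show ?thesis using U by simp
  qed
  define V where "V = g ` u ` {0..M}"
  have Vfin: "finite V" by (simp add: V_def)
  define Fd where "Fd y = (\<Sum>m\<in>{1..M}. piece.cd g gd (u (m-1)) (u m) (incm m) y)" for y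
  have Fder: "(distfun g has_real_derivative Fd y) (at y) \<and> isCont Fd y" if y: "y \<notin> V" for y
  proof -
    have ne: "y \<noteq> piece.lo g (u (m-1)) (u m) \<and> y \<noteq> piece.hi g (u (m-1)) (u m)" if m: "m \<in> {1..M}" for m
    proof -
      have "m - 1 \<in> {0..M}" "m \<in> {0..M}" using m by auto
      then have "g (u (m-1)) \<in> V" "g (u m) \<in> V" unfolding V_def by blast+
      then show ?thesis using y
        unfolding piece.lo_def[OF pieces[OF m]] piece.hi_def[OF pieces[OF m]]
        by (auto simp: min_def max_def)
    qed
    have cd: "(piece.c g (u (m-1)) (u m) has_real_derivative piece.cd g gd (u (m-1)) (u m) (incm m) y) (at y)
        \<and> isCont (piece.cd g gd (u (m-1)) (u m) (incm m)) y" if m: "m \<in> {1..M}" for m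
      using piece.c_deriv[OF pieces[OF m]] ne[OF m] by blast
    have fe: "distfun g = (\<lambda>y. \<Sum>m\<in>{1..M}. piece.c g (u (m-1)) (u m) y)"
      using F_sum by auto
    have "((\<lambda>y. \<Sum>m\<in>{1..M}. piece.c g (u (m-1)) (u m) y) has_real_derivative Fd y) (at y)"
      unfolding Fd_def by (rule DERIV_sum) (use cd in blast)
    moreover have "isCont Fd y" unfolding Fd_def by (rule isCont_sum) (use cd in blast)
    ultimately show ?thesis using fe by simp
  qed
  define Td where "Td v = Fd (g v) * gd v" for v
  have Tder: "((distfun g \<circ> g) has_real_derivative Td v) (at v) \<and> isCont Td v"
    if v: "v \<in> {0<..<1}" "g v \<notin> V" for v
  proof
    have gdv: "(g has_real_derivative gd v) (at v)" using gder v by blast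
    show "((distfun g \<circ> g) has_real_derivative Td v) (at v)"
      unfolding Td_def by (rule DERIV_chain[OF conjunct1[OF Fder[OF v(2)]] gdv])
    have "isCont (\<lambda>v. Fd (g v)) v"
      by (rule isCont_o2[OF DERIV_isCont[OF gdv] conjunct2[OF Fder[OF v(2)]]])
    then show "isCont Td v" unfolding Td_def using gdcont[OF v(1)] by (intro continuous_intros)
  qed
  define B where "B = {0,1} \<union> {v\<in>{0..1}. g v \<in> V}"
  have Bfin: "finite B" unfolding B_def using fin[OF Vfin] by simp
  obtain a :: "nat \<Rightarrow> real" and L where a0: "a 0 = 0" and aL: "a L = 1" and ainc: "\<forall>l<L. a l < a (Suc l)"
    and aB: "\<forall>l\<in>{1..L}. \<forall>x\<in>{a (l-1)<..<a l}. x \<in> {0<..<1} \<and> x \<notin> B"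
  proof -
    have "B \<subseteq> {0..1}" "0 \<in> B" "1 \<in> B" by (auto simp: B_def)
    from partition_exists[OF Bfin this] that show ?thesis by blast
  qed
  have "udp (distfun g \<circ> g)"
  proof (rule udp_lemma[OF gc])
    fix y
    show "finite {v \<in> {0..1}. g v = y}" using fin[of "{y}"] by simp
  qed
  moreover have "\<forall>l\<in>{1..L}. \<exists>T'. (\<forall>x\<in>{a (l-1)<..<a l}. ((distfun g \<circ> g) has_real_derivative T' x) (at x)) \<and>
                          continuous_on {a (l-1)<..<a l} T'"
  proof (rule ballI, rule exI[of _ Td], rule conjI)
    fix l assume l: "l \<in> {1..L}"
    have pt: "x \<in> {0<..<1} \<and> g x \<notin> V" if "x \<in> {a (l-1)<..<a l}" for x
    proof -
      have "x \<in> {0<..<1} \<and> x \<notin> B" using aB l that by blast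
      then show ?thesis unfolding B_def by auto
    qed
    show "\<forall>x\<in>{a (l-1)<..<a l}. ((distfun g \<circ> g) has_real_derivative Td x) (at x)"
      using Tder pt by blast
    show "continuous_on {a (l-1)<..<a l} Td"
      by (rule continuous_at_imp_continuous_on) (use Tder pt in blast)
  qed
  ultimately show ?thesis unfolding regular_udp_def using a0 aL ainc by blast
qed


theorem proposition7:
  fixes g h :: "real \<Rightarrow> real"
  assumes "pw_cont_strict_mono g" "regular_fun g"
      and "pw_cont_strict_mono h" "regular_fun h"
  shows "regular_udp (distfun g \<circ> g) \<and> regular_udp (distfun h \<circ> h)"
  using regular_one assms by blast

end
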